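(* Let $n\ge3$ and $0<q<1$. For every relationship network $G$ on $V$ in which at least one of the three relation types is entirely absent (i.e. $\bigcup_{i}E_i=\varnothing$, or $\bigcup_iF_i=\varnothing$, or $\bigcup_iI_i=\varnothing$), the duples mechanism selects a needy agent with probability strictly greater than $q$: $P_D(G)>q$.
   Context: Let $V=\{1,\dots,n\}$. A relationship network $G$ assigns to every unordered pair of distinct agents exactly one of the symmetric relations friends, enemies, impartial; $F_j,E_j,I_j$ are the friends, enemies, impartials of $j$. Each agent is needy independently with probability $q$; $N$ is the random needy set; every agent $j$ reports truthfully $(N,F_j,E_j)$. Duples mechanism $g^D$: for agent $l$ and $j\ne l$, $\mathrm{lev}_l(j)=1,\dots,6$ according as $j\in F_l\cap N$, $F_l\setminus N$, $I_l\cap N$, $I_l\setminus N$, $E_l\cap N$, $E_l\setminus N$. For distinct $j,k$, agent $l\notin\{j,k\}$ votes for $j$ against $k$ if $\mathrm{lev}_l(j)<\mathrm{lev}_l(k)$ (abstains if equal); $x_{jk}$ counts these votes. $g^D_j(\{j,k\})=1,\tfrac12,0$ as $x_{jk}>,=,<x_{kj}$, $g^D_k(\{j,k\})=1-g^D_j(\{j,k\})$, and $g^D_i=\frac{2}{n(n-1)}\sum_{j\ne i}g^D_i(\{i,j\})$. $P_D(G)=\mathbb E[\sum_{i\in N}g^D_i]$ under truthful reports. *)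

theory Defs
  imports Complex_Main
begin

datatype relation = Friends | Enemies | Impartial

text \<open>A relationship network on V = {1..n}: a function G with G i j the relation
  between distinct agents i and j; it must be symmetric. Values on the diagonal are irrelevant.\<close>
definition network :: "nat \<Rightarrow> (nat \<Rightarrow> nat \<Rightarrow> relation) \<Rightarrow> bool" where
  "network n G \<longleftrightarrow> (\<forall>i\<in>{1..n}. \<forall>j\<in>{1..n}. i \<noteq> j \<longrightarrow> G i j = G j i)"

definition friends :: "nat \<Rightarrow> (nat \<Rightarrow> nat \<Rightarrow> relation) \<Rightarrow> nat \<Rightarrow> nat set" where
  "friends n G j = {k \<in> {1..n}. k \<noteq> j \<and> G j k = Friends}"
definition enemies :: "nat \<Rightarrow> (nat \<Rightarrow> nat \<Rightarrow> relation) \<Rightarrow> nat \<Rightarrow> nat set" where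
  "enemies n G j = {k \<in> {1..n}. k \<noteq> j \<and> G j k = Enemies}"
definition impartials :: "nat \<Rightarrow> (nat \<Rightarrow> nat \<Rightarrow> relation) \<Rightarrow> nat \<Rightarrow> nat set" where
  "impartials n G j = {k \<in> {1..n}. k \<noteq> j \<and> G j k = Impartial}"

definition lev :: "nat \<Rightarrow> (nat \<Rightarrow> nat \<Rightarrow> relation) \<Rightarrow> nat set \<Rightarrow> nat \<Rightarrow> nat \<Rightarrow> nat" where
  "lev n G N l j =
     (if j \<in> friends n G l \<inter> N then 1
      else if j \<in> friends n G l - N then 2
      else if j \<in> impartials n G l \<inter> N then 3
      else if j \<in> impartials n G l - N then 4
      else if j \<in> enemies n G l \<inter> N then 5
      else 6)"

definition votes :: "nat \<Rightarrow> (nat \<Rightarrow> nat \<Rightarrow> relation) \<Rightarrow> nat set \<Rightarrow> nat \<Rightarrow> nat \<Rightarrow> nat" where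
  "votes n G N j k = card {l \<in> {1..n}. l \<noteq> j \<and> l \<noteq> k \<and> lev n G N l j < lev n G N l k}"

definition gpair :: "nat \<Rightarrow> (nat \<Rightarrow> nat \<Rightarrow> relation) \<Rightarrow> nat set \<Rightarrow> nat \<Rightarrow> nat \<Rightarrow> real" where
  "gpair n G N j k =
     (if votes n G N j k > votes n G N k j then 1
      else if votes n G N j k = votes n G N k j then 1/2 else 0)"

definition gD :: "nat \<Rightarrow> (nat \<Rightarrow> nat \<Rightarrow> relation) \<Rightarrow> nat set \<Rightarrow> nat \<Rightarrow> real" where
  "gD n G N i = 2 / (real n * (real n - 1)) * (\<Sum>j\<in>{1..n} - {i}. gpair n G N i j)"

text \<open>Expected probability of selecting a needy agent, each agent needy independently with prob. q.\<close>
definition PD :: "nat \<Rightarrow> real \<Rightarrow> (nat \<Rightarrow> nat \<Rightarrow> relation) \<Rightarrow> real" where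
  "PD n q G = (\<Sum>N\<in>Pow {1..n}. q ^ card N * (1 - q) ^ (n - card N) * (\<Sum>i\<in>N. gD n G N i))"

end

theory Submission
  imports Defs
begin


definition gval :: "nat \<Rightarrow> nat \<Rightarrow> real" where
  "gval x y = (if x > y then 1 else if x = y then 1/2 else 0)"

lemma gval_pair: "x + y \<le> m \<Longrightarrow> gval (m - y) y + gval (m - x) x \<ge> 1"
  by (auto simp: gval_def)

lemma gval_pair_strict: "x + y < m \<Longrightarrow> 2*x \<le> m \<Longrightarrow> 2*y \<le> m \<Longrightarrow> gval (m - y) y + gval (m - x) x > 1"
  by (auto simp: gval_def)

definition aset :: "nat \<Rightarrow> (nat \<Rightarrow> nat \<Rightarrow> bool) \<Rightarrow> nat \<Rightarrow> nat \<Rightarrow> nat set" where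
  "aset n E i j = {l \<in> {1..n}. l \<noteq> i \<and> l \<noteq> j \<and> E l i \<and> \<not> E l j}"

definition acnt :: "nat \<Rightarrow> (nat \<Rightarrow> nat \<Rightarrow> bool) \<Rightarrow> nat \<Rightarrow> nat \<Rightarrow> nat" where
  "acnt n E i j = card (aset n E i j)"

definition dg :: "nat \<Rightarrow> (nat \<Rightarrow> nat \<Rightarrow> bool) \<Rightarrow> nat \<Rightarrow> nat" where
  "dg n E i = card {l \<in> {1..n}. l \<noteq> i \<and> E l i}"

lemma card_V2: "i \<in> {1..n} \<Longrightarrow> j \<in> {1..n} \<Longrightarrow> i \<noteq> j \<Longrightarrow> card ({1..n} - {i,j}) = n - 2"
  by (subst card_Diff_subset) auto

lemma aset_fin: "finite (aset n E i j)"
  unfolding aset_def by simp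

lemma aset_sub: "aset n E i j \<subseteq> {1..n} - {i,j}"
  unfolding aset_def by blast

lemma aset_disj: "aset n E i j \<inter> aset n E j i = {}"
  unfolding aset_def by blast

lemma a_sum_card: "acnt n E i j + acnt n E j i = card (aset n E i j \<union> aset n E j i)"
  unfolding acnt_def by (rule card_Un_disjoint[symmetric]) (auto simp: aset_fin aset_disj)

lemma a_sum_le:
  assumes "i \<in> {1..n}" "j \<in> {1..n}" "i \<noteq> j"
  shows "acnt n E i j + acnt n E j i \<le> n - 2"
proof -
  have sub: "aset n E i j \<union> aset n E j i \<subseteq> {1..n} - {i,j}"
    using aset_sub[of n E i j] aset_sub[of n E j i] by blast
  have "card (aset n E i j \<union> aset n E j i) \<le> card ({1..n} - {i,j})"
    by (rule card_mono[OF _ sub]) simp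
  then show ?thesis using card_V2[OF assms] a_sum_card by simp
qed

lemma a_sum_lt:
  assumes "i \<in> {1..n}" "j \<in> {1..n}" "i \<noteq> j" "l \<in> {1..n}" "l \<noteq> i" "l \<noteq> j" "E l i = E l j"
  shows "acnt n E i j + acnt n E j i < n - 2"
proof -
  have sub: "aset n E i j \<union> aset n E j i \<subseteq> {1..n} - {i,j}"
    using aset_sub[of n E i j] aset_sub[of n E j i] by blast
  have "l \<notin> aset n E i j \<union> aset n E j i" using assms(7) unfolding aset_def by blast
  moreover have "l \<in> {1..n} - {i,j}" using assms by blast
  ultimately have "aset n E i j \<union> aset n E j i \<subset> {1..n} - {i,j}" using sub by blast
  then have "card (aset n E i j \<union> aset n E j i) < card ({1..n} - {i,j})"
    by (rule psubset_card_mono[rotated]) simp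
  then show ?thesis using card_V2[OF assms(1-3)] a_sum_card by simp
qed

lemma B1:
  assumes "i \<in> {1..n}" "j \<in> {1..n}" "i \<noteq> j"
  shows "acnt n E i j + (if E j i then 1 else 0) \<le> dg n E i"
proof (cases "E j i")
  case True
  have "acnt n E i j \<le> card ({l \<in> {1..n}. l \<noteq> i \<and> E l i} - {j})"
    unfolding acnt_def by (rule card_mono) (auto simp: aset_def)
  also have "\<dots> = dg n E i - 1" unfolding dg_def
    by (subst card_Diff_singleton) (use assms True in auto)
  finally have X: "acnt n E i j \<le> dg n E i - 1" .
  have "dg n E i \<ge> 1"
  proof -
    have "card {l \<in> {1..n}. l \<noteq> i \<and> E l i} > 0"
      by (subst card_gt_0_iff) (use assms True in auto)
    then show ?thesis by (simp add: dg_def)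
  qed
  with X show ?thesis using True by simp
next
  case False
  have "acnt n E i j \<le> dg n E i"
    unfolding acnt_def dg_def by (rule card_mono) (auto simp: aset_def)
  then show ?thesis using False by simp
qed

lemma B2:
  assumes "i \<in> {1..n}" "j \<in> {1..n}" "i \<noteq> j"
  shows "acnt n E i j + dg n E j \<le> (n - 2) + (if E i j then 1 else 0)"
proof -
  have "acnt n E i j + card {l \<in> {1..n} - {i,j}. E l j} = card (aset n E i j \<union> {l \<in> {1..n} - {i,j}. E l j})"
    unfolding acnt_def by (subst card_Un_disjoint) (auto simp: aset_def)
  also have "\<dots> \<le> card ({1..n} - {i,j})"
    by (rule card_mono) (auto simp: aset_def)
  finally have 1: "acnt n E i j + card {l \<in> {1..n} - {i,j}. E l j} \<le> n - 2"
    using card_V2[OF assms] by simp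
  have "dg n E j \<le> card {l \<in> {1..n} - {i,j}. E l j} + (if E i j then 1 else 0)"
  proof (cases "E i j")
    case True
    have "dg n E j \<le> card (insert i {l \<in> {1..n} - {i,j}. E l j})"
      unfolding dg_def by (rule card_mono) auto
    also have "\<dots> \<le> card {l \<in> {1..n} - {i,j}. E l j} + 1"
      by (simp add: card_insert_if)
    finally show ?thesis using True by simp
  next
    case False
    have "dg n E j \<le> card {l \<in> {1..n} - {i,j}. E l j}"
      unfolding dg_def by (rule card_mono) (use False in auto)
    then show ?thesis using False by simp
  qed
  with 1 show ?thesis by linarith
qed


definition good :: "nat \<Rightarrow> (nat \<Rightarrow> nat \<Rightarrow> bool) \<Rightarrow> nat \<Rightarrow> nat \<Rightarrow> bool" where
  "good n E i j \<longleftrightarrow> i \<in> {1..n} \<and> j \<in> {1..n} \<and> i \<noteq> j \<and> 2 * acnt n E i j \<le> n - 2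
     \<and> 2 * acnt n E j i \<le> n - 2 \<and> acnt n E i j + acnt n E j i < n - 2"

lemma same_class:
  assumes sym: "\<forall>i\<in>{1..n}. \<forall>j\<in>{1..n}. i \<noteq> j \<longrightarrow> E i j = E j i"
    and ij: "i \<in> {1..n}" "j \<in> {1..n}" "i \<noteq> j" and n: "n \<ge> 3"
    and cls: "(2*dg n E i \<le> n-2 \<and> 2*dg n E j \<le> n-2) \<or> (2*dg n E i = n-1 \<and> 2*dg n E j = n-1)
       \<or> (2*dg n E i \<ge> n \<and> 2*dg n E j \<ge> n)"
  shows "2 * acnt n E i j \<le> n - 2 \<and> 2 * acnt n E j i \<le> n - 2"
proof -
  have b1: "acnt n E i j + (if E j i then 1 else 0) \<le> dg n E i" by (rule B1[OF ij])
  have b1': "acnt n E j i + (if E i j then 1 else 0) \<le> dg n E j" by (rule B1) (use ij in auto)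
  have b2: "acnt n E i j + dg n E j \<le> (n - 2) + (if E i j then 1 else 0)" by (rule B2[OF ij])
  have b2': "acnt n E j i + dg n E i \<le> (n - 2) + (if E j i then 1 else 0)" by (rule B2) (use ij in auto)
  have e: "E i j = E j i" using sym ij by blast
  show ?thesis
  proof (cases "E i j")
    case True
    then show ?thesis using b1 b1' b2 b2' e cls n by auto
  next
    case False
    then show ?thesis using b1 b1' b2 b2' e cls n by auto
  qed
qed

lemma triangle:
  assumes sym: "\<forall>i\<in>{1..n}. \<forall>j\<in>{1..n}. i \<noteq> j \<longrightarrow> E i j = E j i"
    and V: "x \<in> {1..n}" "y \<in> {1..n}" "z \<in> {1..n}" and d: "x \<noteq> y" "y \<noteq> z" "x \<noteq> z"
  shows "acnt n E y z + acnt n E z y < n - 2 \<or> acnt n E x z + acnt n E z x < n - 2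
    \<or> acnt n E x y + acnt n E y x < n - 2"
proof -
  have "E x y = E x z \<or> E y x = E y z \<or> E z x = E z y"
    using sym V d by metis
  then show ?thesis
  proof (elim disjE)
    assume "E x y = E x z" then show ?thesis using a_sum_lt[of y n z x E] V d by auto
  next
    assume "E y x = E y z" then show ?thesis using a_sum_lt[of x n z y E] V d by auto
  next
    assume "E z x = E z y" then show ?thesis using a_sum_lt[of x n y z E] V d by auto
  qed
qed

lemma graph_main:
  assumes sym: "\<forall>i\<in>{1..n}. \<forall>j\<in>{1..n}. i \<noteq> j \<longrightarrow> E i j = E j i"
    and n: "n \<ge> 3"
  shows "\<exists>i j. good n E i j"
proof -
  have goodI: "good n E i j" if "i \<in> {1..n}" "j \<in> {1..n}" "i \<noteq> j"
    "2 * acnt n E i j \<le> n - 2" "2 * acnt n E j i \<le> n - 2" "acnt n E i j + acnt n E j i < n - 2" for i j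
    using that unfolding good_def by blast
  have small: "\<exists>i j. good n E i j" if "i \<in> {1..n}" "j \<in> {1..n}" "i \<noteq> j"
     "acnt n E i j + acnt n E j i < n - 2" "n \<le> 4" for i j
    by (rule exI[of _ i], rule exI[of _ j], rule goodI) (use that in auto)
  show ?thesis
  proof (cases "n \<le> 4")
    case True
    have "acnt n E 2 3 + acnt n E 3 2 < n - 2 \<or> acnt n E 1 3 + acnt n E 3 1 < n - 2
       \<or> acnt n E 1 2 + acnt n E 2 1 < n - 2"
      by (rule triangle[OF sym]) (use n in auto)
    then show ?thesis
    proof (elim disjE)
      assume h: "acnt n E 2 3 + acnt n E 3 2 < n - 2" show ?thesis by (rule small[of 2 3]) (use h True n in auto)
    next
      assume h: "acnt n E 1 3 + acnt n E 3 1 < n - 2" show ?thesis by (rule small[of 1 3]) (use h True n in auto)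
    next
      assume h: "acnt n E 1 2 + acnt n E 2 1 < n - 2" show ?thesis by (rule small[of 1 2]) (use h True n in auto)
    qed
  next
    case False
    show ?thesis
    proof (cases "odd n")
      case True
      define cl where "cl x = (if 2 * dg n E x \<le> n - 2 then 0 else if 2 * dg n E x = n - 1 then 1 else (2::nat))" for x
      have clb: "cl x \<le> 2" for x unfolding cl_def by simp
      have pair: "\<exists>i j. good n E i j" if "i \<in> {1..n}" "j \<in> {1..n}" "i \<noteq> j" "cl i = cl j" for i j
      proof -
        have cls: "(2*dg n E i \<le> n-2 \<and> 2*dg n E j \<le> n-2) \<or> (2*dg n E i = n-1 \<and> 2*dg n E j = n-1)
           \<or> (2*dg n E i \<ge> n \<and> 2*dg n E j \<ge> n)"
          using that(4) unfolding cl_def by (cases "2 * dg n E i \<le> n - 2"; cases "2 * dg n E j \<le> n - 2"; cases "2*dg n E i = n-1"; cases "2*dg n E j = n-1") (simp_all, linarith+)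
        have h: "2 * acnt n E i j \<le> n - 2 \<and> 2 * acnt n E j i \<le> n - 2"
          by (rule same_class[OF sym that(1-3) n cls])
        have o: "odd (n - 2)" using True n by simp
        have "2 * acnt n E i j \<noteq> n - 2" "2 * acnt n E j i \<noteq> n - 2" using o by (metis dvd_triv_left)+
        then have "acnt n E i j + acnt n E j i < n - 2" using h by linarith
        then show ?thesis using h that goodI by blast
      qed
      have "cl 1 = cl 2 \<or> cl 1 = cl 3 \<or> cl 1 = cl 4 \<or> cl 2 = cl 3 \<or> cl 2 = cl 4 \<or> cl 3 = cl 4"
        using clb[of 1] clb[of 2] clb[of 3] clb[of 4] by linarith
      then show ?thesis
      proof (elim disjE)
        assume "cl 1 = cl 2" then show ?thesis using False by (intro pair[of 1 2]) auto
      next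
        assume "cl 1 = cl 3" then show ?thesis using False by (intro pair[of 1 3]) auto
      next
        assume "cl 1 = cl 4" then show ?thesis using False by (intro pair[of 1 4]) auto
      next
        assume "cl 2 = cl 3" then show ?thesis using False by (intro pair[of 2 3]) auto
      next
        assume "cl 2 = cl 4" then show ?thesis using False by (intro pair[of 2 4]) auto
      next
        assume "cl 3 = cl 4" then show ?thesis using False by (intro pair[of 3 4]) auto
      qed
    next
      case ev: False
      define P where "P x = (2 * dg n E x \<le> n - 2)" for x
      have trip: "\<exists>i j. good n E i j" if "x \<in> {1..n}" "y \<in> {1..n}" "z \<in> {1..n}"
          "x \<noteq> y" "y \<noteq> z" "x \<noteq> z" "P x = P y" "P y = P z" for x y z
      proof -
        have nP: "2 * dg n E w \<ge> n" if "\<not> P w" for w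
        proof -
          have "odd (n - 1)" using ev n by simp
          then have "2 * dg n E w \<noteq> n - 1" by (metis dvd_triv_left)
          then show ?thesis using that n unfolding P_def by linarith
        qed
        have pair: "\<exists>i j. good n E i j" if "i \<in> {1..n}" "j \<in> {1..n}" "i \<noteq> j" "P i = P j"
            "acnt n E i j + acnt n E j i < n - 2" for i j
        proof -
          have cls: "(2*dg n E i \<le> n-2 \<and> 2*dg n E j \<le> n-2) \<or> (2*dg n E i = n-1 \<and> 2*dg n E j = n-1)
             \<or> (2*dg n E i \<ge> n \<and> 2*dg n E j \<ge> n)"
            using that(4) nP[of i] nP[of j] unfolding P_def by (cases "P i") (auto simp: P_def)
          have h: "2 * acnt n E i j \<le> n - 2 \<and> 2 * acnt n E j i \<le> n - 2"
            by (rule same_class[OF sym that(1-3) n cls])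
          then show ?thesis using h that goodI by blast
        qed
        have "acnt n E y z + acnt n E z y < n - 2 \<or> acnt n E x z + acnt n E z x < n - 2
          \<or> acnt n E x y + acnt n E y x < n - 2"
          by (rule triangle[OF sym that(1-6)])
        then show ?thesis
        proof (elim disjE)
          assume "acnt n E y z + acnt n E z y < n - 2" then show ?thesis using that by (intro pair[of y z]) auto
        next
          assume "acnt n E x z + acnt n E z x < n - 2" then show ?thesis using that by (intro pair[of x z]) auto
        next
          assume "acnt n E x y + acnt n E y x < n - 2" then show ?thesis using that by (intro pair[of x y]) auto
        qed
      qed
      have "(P 1 = P 2 \<and> P 2 = P 3) \<or> (P 1 = P 2 \<and> P 2 = P 4) \<or> (P 1 = P 2 \<and> P 2 = P 5)
        \<or> (P 1 = P 3 \<and> P 3 = P 4) \<or> (P 1 = P 3 \<and> P 3 = P 5) \<or> (P 1 = P 4 \<and> P 4 = P 5)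
        \<or> (P 2 = P 3 \<and> P 3 = P 4) \<or> (P 2 = P 3 \<and> P 3 = P 5) \<or> (P 2 = P 4 \<and> P 4 = P 5)
        \<or> (P 3 = P 4 \<and> P 4 = P 5)"
        by blast
      moreover have "n \<ge> 5" using False by simp
      ultimately show ?thesis
      proof (elim disjE)
        assume "P 1 = P 2 \<and> P 2 = P 3" then show ?thesis using \<open>n \<ge> 5\<close> by (intro trip[of 1 2 3]) auto
      next
        assume "P 1 = P 2 \<and> P 2 = P 4" then show ?thesis using \<open>n \<ge> 5\<close> by (intro trip[of 1 2 4]) auto
      next
        assume "P 1 = P 2 \<and> P 2 = P 5" then show ?thesis using \<open>n \<ge> 5\<close> by (intro trip[of 1 2 5]) auto
      next
        assume "P 1 = P 3 \<and> P 3 = P 4" then show ?thesis using \<open>n \<ge> 5\<close> by (intro trip[of 1 3 4]) auto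
      next
        assume "P 1 = P 3 \<and> P 3 = P 5" then show ?thesis using \<open>n \<ge> 5\<close> by (intro trip[of 1 3 5]) auto
      next
        assume "P 1 = P 4 \<and> P 4 = P 5" then show ?thesis using \<open>n \<ge> 5\<close> by (intro trip[of 1 4 5]) auto
      next
        assume "P 2 = P 3 \<and> P 3 = P 4" then show ?thesis using \<open>n \<ge> 5\<close> by (intro trip[of 2 3 4]) auto
      next
        assume "P 2 = P 3 \<and> P 3 = P 5" then show ?thesis using \<open>n \<ge> 5\<close> by (intro trip[of 2 3 5]) auto
      next
        assume "P 2 = P 4 \<and> P 4 = P 5" then show ?thesis using \<open>n \<ge> 5\<close> by (intro trip[of 2 4 5]) auto
      next
        assume "P 3 = P 4 \<and> P 4 = P 5" then show ?thesis using \<open>n \<ge> 5\<close> by (intro trip[of 3 4 5]) auto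
      qed
    qed
  qed
qed



lemma marg:
  fixes q :: real
  assumes "finite V" "A \<subseteq> V" "B \<subseteq> V" "A \<inter> B = {}"
  shows "(\<Sum>N\<in>Pow V. q ^ card N * (1-q) ^ card (V - N) * (if A \<subseteq> N \<and> N \<inter> B = {} then 1 else 0))
         = q ^ card A * (1-q) ^ card B"
proof -
  define f1 where "f1 x = (if x \<in> B then 0 else q)" for x
  define f2 where "f2 x = (if x \<in> A then 0 else 1 - q)" for x
  have "(\<Prod>x\<in>V. f1 x + f2 x) = (\<Sum>N\<in>Pow V. (\<Prod>x\<in>N. f1 x) * (\<Prod>x\<in>V-N. f2 x))"
    by (rule prod_add[OF assms(1)])
  also have "\<dots> = (\<Sum>N\<in>Pow V. q ^ card N * (1-q) ^ card (V - N) * (if A \<subseteq> N \<and> N \<inter> B = {} then 1 else 0))"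
  proof (rule sum.cong[OF refl])
    fix N assume N: "N \<in> Pow V"
    have fN: "finite N" using N assms(1) finite_subset by auto
    show "(\<Prod>x\<in>N. f1 x) * (\<Prod>x\<in>V-N. f2 x) = q ^ card N * (1-q) ^ card (V - N) * (if A \<subseteq> N \<and> N \<inter> B = {} then 1 else 0)"
    proof (cases "A \<subseteq> N \<and> N \<inter> B = {}")
      case True
      have "(\<Prod>x\<in>N. f1 x) = (\<Prod>x\<in>N. q)" by (rule prod.cong) (use True in \<open>auto simp: f1_def\<close>)
      moreover have "(\<Prod>x\<in>V-N. f2 x) = (\<Prod>x\<in>V-N. 1-q)" by (rule prod.cong) (use True in \<open>auto simp: f2_def\<close>)
      ultimately show ?thesis using True by simp
    next
      case False
      have z: "(if A \<subseteq> N \<and> N \<inter> B = {} then 1 else 0) = (0::real)" using False by simp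
      from False consider x where "x \<in> A" "x \<notin> N" | x where "x \<in> N" "x \<in> B" by blast
      then show ?thesis
      proof cases
        case 1
        have h: "(\<Prod>x\<in>V-N. f2 x) = 0" using 1 assms(2) assms(1) by (subst prod_zero_iff) (auto simp: f2_def)
        show ?thesis by (simp only: z h mult_zero_right mult_zero_left)
      next
        case 2
        have h: "(\<Prod>x\<in>N. f1 x) = 0" using 2 fN by (subst prod_zero_iff) (auto simp: f1_def)
        show ?thesis by (simp only: z h mult_zero_right mult_zero_left)
      qed
    qed
  qed
  finally have eq: "(\<Prod>x\<in>V. f1 x + f2 x) = (\<Sum>N\<in>Pow V. q ^ card N * (1-q) ^ card (V - N) * (if A \<subseteq> N \<and> N \<inter> B = {} then 1 else 0))" .
  have finA: "finite A" "finite B" using assms finite_subset by blast+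
  have p1: "(\<Prod>x\<in>V. f1 x + f2 x) = (\<Prod>x\<in>V - A. f1 x + f2 x) * (\<Prod>x\<in>A. f1 x + f2 x)"
    by (rule prod.subset_diff[OF assms(2,1)])
  have p2: "(\<Prod>x\<in>A. f1 x + f2 x) = (\<Prod>x\<in>A. q)"
    by (rule prod.cong) (use assms(4) in \<open>auto simp: f1_def f2_def\<close>)
  have p3: "(\<Prod>x\<in>V-A. f1 x + f2 x) = (\<Prod>x\<in>(V-A)-B. f1 x + f2 x) * (\<Prod>x\<in>B. f1 x + f2 x)"
    by (rule prod.subset_diff) (use assms in auto)
  have p4: "(\<Prod>x\<in>B. f1 x + f2 x) = (\<Prod>x\<in>B. 1 - q)"
    by (rule prod.cong) (use assms(4) in \<open>auto simp: f1_def f2_def\<close>)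
  have p5: "(\<Prod>x\<in>(V-A)-B. f1 x + f2 x) = (\<Prod>x\<in>(V-A)-B. 1)"
    by (rule prod.cong) (auto simp: f1_def f2_def)
  have "(\<Prod>x\<in>V. f1 x + f2 x) = q ^ card A * (1-q) ^ card B"
    using p1 p2 p3 p4 p5 by simp
  then show ?thesis using eq by simp
qed

lemma marg1:
  fixes q :: real
  assumes "finite V" "i \<in> V"
  shows "(\<Sum>N\<in>Pow V. q ^ card N * (1-q) ^ card (V - N) * (if i \<in> N then 1 else 0)) = q"
  using marg[of V "{i}" "{}" q] assms by simp

lemma marg2:
  fixes q :: real
  assumes "finite V" "i \<in> V" "j \<in> V" "i \<noteq> j"
  shows "(\<Sum>N\<in>Pow V. q ^ card N * (1-q) ^ card (V - N) * (if i \<in> N \<and> j \<notin> N then 1 else 0)) = q * (1 - q)"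
  using marg[of V "{i}" "{j}" q] assms by simp



definition rk :: "relation \<Rightarrow> nat" where
  "rk r = (case r of Friends \<Rightarrow> 0 | Impartial \<Rightarrow> 1 | Enemies \<Rightarrow> 2)"

lemma lev_val:
  assumes "l \<in> {1..n}" "x \<in> {1..n}" "l \<noteq> x"
  shows "lev n G N l x = 2 * rk (G l x) + (if x \<in> N then 1 else 2)"
  using assms by (cases "G l x") (auto simp: lev_def friends_def enemies_def impartials_def rk_def)

lemma low_exists:
  assumes "(\<Union>i\<in>{1..n}. enemies n G i) = {} \<or> (\<Union>i\<in>{1..n}. friends n G i) = {}
         \<or> (\<Union>i\<in>{1..n}. impartials n G i) = {}"
  shows "\<exists>low. \<forall>l\<in>{1..n}. \<forall>x\<in>{1..n}. \<forall>y\<in>{1..n}. l \<noteq> x \<longrightarrow> l \<noteq> y \<longrightarrow>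
           (rk (G l y) < rk (G l x)) = (low (G l y) \<and> \<not> low (G l x))"
  using assms
proof (elim disjE)
  assume h: "(\<Union>i\<in>{1..n}. enemies n G i) = {}"
  have ne: "G l x \<noteq> Enemies" if "l \<in> {1..n}" "x \<in> {1..n}" "l \<noteq> x" for l x
  proof
    assume "G l x = Enemies"
    then have "x \<in> enemies n G l" using that unfolding enemies_def by auto
    then show False using h that by blast
  qed
  show ?thesis
  proof (rule exI[of _ "\<lambda>r. r = Friends"], intro ballI impI)
    fix l x y assume *: "l \<in> {1..n}" "x \<in> {1..n}" "y \<in> {1..n}" "l \<noteq> x" "l \<noteq> y"
    show "(rk (G l y) < rk (G l x)) = (G l y = Friends \<and> G l x \<noteq> Friends)"
      using ne[of l x] ne[of l y] * by (cases "G l x"; cases "G l y") (auto simp: rk_def)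
  qed
next
  assume h: "(\<Union>i\<in>{1..n}. friends n G i) = {}"
  have ne: "G l x \<noteq> Friends" if "l \<in> {1..n}" "x \<in> {1..n}" "l \<noteq> x" for l x
  proof
    assume "G l x = Friends"
    then have "x \<in> friends n G l" using that unfolding friends_def by auto
    then show False using h that by blast
  qed
  show ?thesis
  proof (rule exI[of _ "\<lambda>r. r = Impartial"], intro ballI impI)
    fix l x y assume *: "l \<in> {1..n}" "x \<in> {1..n}" "y \<in> {1..n}" "l \<noteq> x" "l \<noteq> y"
    show "(rk (G l y) < rk (G l x)) = (G l y = Impartial \<and> G l x \<noteq> Impartial)"
      using ne[of l x] ne[of l y] * by (cases "G l x"; cases "G l y") (auto simp: rk_def)
  qed
next
  assume h: "(\<Union>i\<in>{1..n}. impartials n G i) = {}"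
  have ne: "G l x \<noteq> Impartial" if "l \<in> {1..n}" "x \<in> {1..n}" "l \<noteq> x" for l x
  proof
    assume "G l x = Impartial"
    then have "x \<in> impartials n G l" using that unfolding impartials_def by auto
    then show False using h that by blast
  qed
  show ?thesis
  proof (rule exI[of _ "\<lambda>r. r = Friends"], intro ballI impI)
    fix l x y assume *: "l \<in> {1..n}" "x \<in> {1..n}" "y \<in> {1..n}" "l \<noteq> x" "l \<noteq> y"
    show "(rk (G l y) < rk (G l x)) = (G l y = Friends \<and> G l x \<noteq> Friends)"
      using ne[of l x] ne[of l y] * by (cases "G l x"; cases "G l y") (auto simp: rk_def)
  qed
qed

lemma gpair_val:
  assumes low: "\<forall>l\<in>{1..n}. \<forall>x\<in>{1..n}. \<forall>y\<in>{1..n}. l \<noteq> x \<longrightarrow> l \<noteq> y \<longrightarrow>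
           (rk (G l y) < rk (G l x)) = (low (G l y) \<and> \<not> low (G l x))"
    and E: "E = (\<lambda>l x. low (G l x))"
    and N: "i \<in> N" "j \<notin> N" "i \<in> {1..n}" "j \<in> {1..n}"
  shows "gpair n G N i j = gval (n - 2 - acnt n E j i) (acnt n E j i)"
proof -
  have ij: "i \<noteq> j" using N by auto
  have lv: "lev n G N l j < lev n G N l i \<longleftrightarrow> E l j \<and> \<not> E l i"
    if "l \<in> {1..n}" "l \<noteq> i" "l \<noteq> j" for l
  proof -
    have "lev n G N l j = 2 * rk (G l j) + 2" using lev_val[of l n j G N] that N by simp
    moreover have "lev n G N l i = 2 * rk (G l i) + 1" using lev_val[of l n i G N] that N by simp
    moreover have "(rk (G l j) < rk (G l i)) = (low (G l j) \<and> \<not> low (G l i))"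
      using low that N by blast
    ultimately show ?thesis unfolding E by auto
  qed
  have lv2: "lev n G N l i < lev n G N l j \<longleftrightarrow> \<not> (E l j \<and> \<not> E l i)"
    if "l \<in> {1..n}" "l \<noteq> i" "l \<noteq> j" for l
  proof -
    have "lev n G N l j = 2 * rk (G l j) + 2" using lev_val[of l n j G N] that N by simp
    moreover have "lev n G N l i = 2 * rk (G l i) + 1" using lev_val[of l n i G N] that N by simp
    ultimately have "lev n G N l i < lev n G N l j \<longleftrightarrow> \<not> lev n G N l j < lev n G N l i" by presburger
    then show ?thesis using lv[OF that] by simp
  qed
  have v1: "votes n G N j i = acnt n E j i"
    unfolding votes_def acnt_def aset_def
    by (rule arg_cong[where f=card]) (use lv in blast)
  have "{l \<in> {1..n}. l \<noteq> i \<and> l \<noteq> j \<and> lev n G N l i < lev n G N l j} = ({1..n} - {i,j}) - aset n E j i"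
    unfolding aset_def using lv2 by blast
  then have "votes n G N i j = card (({1..n} - {i,j}) - aset n E j i)"
    unfolding votes_def by simp
  also have "\<dots> = card ({1..n} - {i,j}) - card (aset n E j i)"
    by (rule card_Diff_subset) (use aset_fin[of n E j i] aset_sub[of n E j i] in blast)+
  also have "\<dots> = n - 2 - acnt n E j i" using card_V2[of i n j] N ij by (simp add: acnt_def)
  finally have v2: "votes n G N i j = n - 2 - acnt n E j i" .
  show ?thesis unfolding gpair_def gval_def v1 v2 by simp
qed



lemma sum_offdiag:
  fixes g :: "nat \<Rightarrow> real"
  assumes "finite N" "i \<in> N"
  shows "(\<Sum>j\<in>N. if j = i then 0 else g j) = (\<Sum>j\<in>N - {i}. g j)"
proof -
  have "(\<Sum>j\<in>N. if j = i then 0 else g j) = (if i = i then 0 else g i) + (\<Sum>j\<in>N - {i}. if j = i then 0 else g j)"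
    by (rule sum.remove[OF assms])
  also have "(\<Sum>j\<in>N - {i}. if j = i then 0 else g j) = (\<Sum>j\<in>N - {i}. g j)" by (rule sum.cong) auto
  also have "(if i = i then 0 else g i) = 0" by simp
  finally show ?thesis by simp
qed

lemma pairs_half:
  fixes gp :: "nat \<Rightarrow> nat \<Rightarrow> real"
  assumes fin: "finite N" and sy: "\<And>i j. gp i j + gp j i = 1"
  shows "(\<Sum>i\<in>N. \<Sum>j\<in>N. if j = i then 0 else gp i j) = real (card N) * (real (card N) - 1) / 2"
proof -
  let ?S = "\<Sum>i\<in>N. \<Sum>j\<in>N. if j = i then 0 else gp i j"
  have sw: "?S = (\<Sum>i\<in>N. \<Sum>j\<in>N. if j = i then 0 else gp j i)"
    by (subst sum.swap) (intro sum.cong refl, auto)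
  have "2 * ?S = (\<Sum>i\<in>N. \<Sum>j\<in>N. (if j = i then 0 else gp i j) + (if j = i then 0 else gp j i))"
    by (simp only: sum.distrib) (use sw in simp)
  also have "\<dots> = (\<Sum>i\<in>N. \<Sum>j\<in>N. if j = i then 0 else 1)"
    by (intro sum.cong refl) (simp add: sy)
  also have "\<dots> = (\<Sum>i\<in>N. real (card N) - 1)"
  proof (intro sum.cong refl)
    fix i assume i: "i \<in> N"
    have "(\<Sum>j\<in>N. if j = i then 0 else (1::real)) = (\<Sum>j\<in>N - {i}. 1)" by (rule sum_offdiag[OF fin i])
    also have "\<dots> = real (card N) - 1"
    proof -
      have "card N > 0" using i fin card_gt_0_iff by blast
      then show ?thesis using i fin by (simp add: card_Diff_singleton of_nat_diff)
    qed
    finally show "(\<Sum>j\<in>N. if j = i then 0 else (1::real)) = real (card N) - 1" .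
  qed
  also have "\<dots> = real (card N) * (real (card N) - 1)" by simp
  finally show ?thesis by simp
qed

theorem proposition3:
  fixes n :: nat and q :: real and G :: "nat \<Rightarrow> nat \<Rightarrow> relation"
  assumes "n \<ge> 3" and "0 < q" and "q < 1"
    and "network n G"
    and "(\<Union>i\<in>{1..n}. enemies n G i) = {} \<or> (\<Union>i\<in>{1..n}. friends n G i) = {}
         \<or> (\<Union>i\<in>{1..n}. impartials n G i) = {}"
  shows "PD n q G > q"
proof -
  define V where "V = {1..n}"
  have finV: "finite V" and cardV: "card V = n" by (simp_all add: V_def)
  obtain low where low: "\<forall>l\<in>{1..n}. \<forall>x\<in>{1..n}. \<forall>y\<in>{1..n}. l \<noteq> x \<longrightarrow> l \<noteq> y \<longrightarrow>
           (rk (G l y) < rk (G l x)) = (low (G l y) \<and> \<not> low (G l x))"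
    using low_exists[OF assms(5)] by blast
  define E where "E = (\<lambda>l x. low (G l x))"
  have sym: "\<forall>i\<in>{1..n}. \<forall>j\<in>{1..n}. i \<noteq> j \<longrightarrow> E i j = E j i"
    using assms(4) unfolding network_def E_def by simp
  define phi where "phi i j = gval (n - 2 - acnt n E j i) (acnt n E j i)" for i j
  have gp: "gpair n G N i j = phi i j" if "N \<subseteq> V" "i \<in> N" "j \<in> V" "j \<notin> N" for N i j
    unfolding phi_def by (rule gpair_val[OF low E_def]) (use that in \<open>auto simp: V_def\<close>)
  have gpsym: "gpair n G N i j + gpair n G N j i = 1" for N i j
    unfolding gpair_def by auto
  define K where "K = 2 / (real n * (real n - 1))"
  define H where "H N = (\<Sum>i\<in>V. \<Sum>j\<in>V. if i \<in> N \<and> j \<notin> N then phi i j - 1/2 else 0)" for N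
  have n1: "real n - 1 > 0" using assms(1) by simp
  have stepA: "(\<Sum>i\<in>N. gD n G N i) = real (card N) / real n + K * H N" if NV: "N \<subseteq> V" for N
  proof -
    have finN: "finite N" using NV finV finite_subset by blast
    have cN: "card N \<le> n" using card_mono[OF finV NV] cardV by simp
    have cVN: "card (V - N) = n - card N" using card_Diff_subset[OF finN NV] cardV by simp
    have split: "(\<Sum>j\<in>V-{i}. gpair n G N i j) = (\<Sum>j\<in>N. if j = i then 0 else gpair n G N i j)
        + ((\<Sum>j\<in>V-N. phi i j - 1/2) + real (n - card N) / 2)" if i: "i \<in> N" for i
    proof -
      have eq: "V - {i} = (N - {i}) \<union> (V - N)" using i NV by blast
      have "(\<Sum>j\<in>V-{i}. gpair n G N i j) = (\<Sum>j\<in>N-{i}. gpair n G N i j) + (\<Sum>j\<in>V-N. gpair n G N i j)"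
        unfolding eq by (rule sum.union_disjoint) (use finN finV in auto)
      also have "(\<Sum>j\<in>N-{i}. gpair n G N i j) = (\<Sum>j\<in>N. if j = i then 0 else gpair n G N i j)"
        by (rule sum_offdiag[OF finN i, symmetric])
      also have "(\<Sum>j\<in>V-N. gpair n G N i j) = (\<Sum>j\<in>V-N. (phi i j - 1/2) + 1/2)"
        by (intro sum.cong refl) (use gp[OF NV i] in auto)
      also have "\<dots> = (\<Sum>j\<in>V-N. phi i j - 1/2) + real (n - card N) / 2"
        by (simp add: sum_subtractf cVN)
      finally show ?thesis .
    qed
    have HN: "H N = (\<Sum>i\<in>N. \<Sum>j\<in>V-N. phi i j - 1/2)"
    proof -
      have "H N = (\<Sum>i\<in>V. if i \<in> N then (\<Sum>j\<in>V-N. phi i j - 1/2) else 0)"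
        unfolding H_def
      proof (intro sum.cong refl)
        fix i assume "i \<in> V"
        show "(\<Sum>j\<in>V. if i \<in> N \<and> j \<notin> N then phi i j - 1/2 else 0) = (if i \<in> N then (\<Sum>j\<in>V-N. phi i j - 1/2) else 0)"
        proof (cases "i \<in> N")
          case True
          have "(\<Sum>j\<in>V. if i \<in> N \<and> j \<notin> N then phi i j - 1/2 else 0) = (\<Sum>j\<in>V. if j \<notin> N then phi i j - 1/2 else 0)"
            using True by simp
          also have "\<dots> = (\<Sum>j\<in>{j\<in>V. j \<notin> N}. phi i j - 1/2)" by (rule sum.inter_filter[OF finV, symmetric])
          also have "{j\<in>V. j \<notin> N} = V - N" by blast
          finally show ?thesis using True by simp
        qed simp
      qed
      also have "\<dots> = (\<Sum>i\<in>{i\<in>V. i \<in> N}. \<Sum>j\<in>V-N. phi i j - 1/2)" by (rule sum.inter_filter[OF finV, symmetric])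
      also have "{i\<in>V. i \<in> N} = N" using NV by blast
      finally show ?thesis .
    qed
    have "(\<Sum>i\<in>N. gD n G N i) = K * (\<Sum>i\<in>N. \<Sum>j\<in>V-{i}. gpair n G N i j)"
      unfolding gD_def K_def V_def by (simp add: sum_distrib_left)
    also have "(\<Sum>i\<in>N. \<Sum>j\<in>V-{i}. gpair n G N i j) = (\<Sum>i\<in>N. \<Sum>j\<in>N. if j = i then 0 else gpair n G N i j)
        + (H N + real (card N) * real (n - card N) / 2)"
      by (simp add: split sum.distrib HN)
    also have "\<dots> = real (card N) * (real (card N) - 1) / 2 + (H N + real (card N) * real (n - card N) / 2)"
      by (subst pairs_half[OF finN gpsym]) simp
    also have "K * \<dots> = real (card N) / real n + K * H N"
      using cN n1 assms(1) unfolding K_def by (simp add: of_nat_diff field_simps)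
    finally show ?thesis .
  qed
  define w where "w N = q ^ card N * (1-q) ^ (n - card N)" for N :: "nat set"
  have wV: "w N = q ^ card N * (1-q) ^ card (V - N)" if "N \<in> Pow V" for N
  proof -
    have "N \<subseteq> V" using that by simp
    then have "card (V - N) = n - card N" using card_Diff_subset[of N V] finV cardV finite_subset by metis
    then show ?thesis unfolding w_def by simp
  qed
  have PDeq: "PD n q G = (\<Sum>N\<in>Pow V. w N * (real (card N) / real n + K * H N))"
    unfolding PD_def w_def V_def[symmetric] by (intro sum.cong refl) (simp add: stepA)
  have E1: "(\<Sum>N\<in>Pow V. w N * real (card N)) = real n * q"
  proof -
    have "(\<Sum>N\<in>Pow V. w N * real (card N)) = (\<Sum>N\<in>Pow V. \<Sum>i\<in>V. w N * (if i \<in> N then 1 else 0))"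
    proof (intro sum.cong refl)
      fix N assume N: "N \<in> Pow V"
      have "{i\<in>V. i \<in> N} = N" using N by blast
      then have "real (card N) = (\<Sum>i\<in>{i\<in>V. i \<in> N}. 1)" by simp
      also have "\<dots> = (\<Sum>i\<in>V. if i \<in> N then 1 else 0)" by (rule sum.inter_filter[OF finV])
      finally show "w N * real (card N) = (\<Sum>i\<in>V. w N * (if i \<in> N then 1 else 0))"
        by (simp add: sum_distrib_left)
    qed
    also have "\<dots> = (\<Sum>i\<in>V. \<Sum>N\<in>Pow V. w N * (if i \<in> N then 1 else 0))" by (rule sum.swap)
    also have "\<dots> = (\<Sum>i\<in>V. q)"
    proof (intro sum.cong refl)
      fix i assume i: "i \<in> V"
      have "(\<Sum>N\<in>Pow V. w N * (if i \<in> N then 1 else 0)) = (\<Sum>N\<in>Pow V. q ^ card N * (1-q) ^ card (V - N) * (if i \<in> N then 1 else 0))"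
        by (intro sum.cong refl) (simp add: wV)
      also have "\<dots> = q" by (rule marg1[OF finV i])
      finally show "(\<Sum>N\<in>Pow V. w N * (if i \<in> N then 1 else 0)) = q" .
    qed
    finally show ?thesis using cardV by simp
  qed
  define T where "T = (\<Sum>i\<in>V. \<Sum>j\<in>V. if i \<noteq> j then phi i j - 1/2 else 0)"
  have E2: "(\<Sum>N\<in>Pow V. w N * H N) = q * (1 - q) * T"
  proof -
    have "(\<Sum>N\<in>Pow V. w N * H N) = (\<Sum>N\<in>Pow V. \<Sum>i\<in>V. \<Sum>j\<in>V. w N * (if i \<in> N \<and> j \<notin> N then phi i j - 1/2 else 0))"
      unfolding H_def by (simp add: sum_distrib_left)
    also have "\<dots> = (\<Sum>i\<in>V. \<Sum>N\<in>Pow V. \<Sum>j\<in>V. w N * (if i \<in> N \<and> j \<notin> N then phi i j - 1/2 else 0))"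
      by (rule sum.swap)
    also have "\<dots> = (\<Sum>i\<in>V. \<Sum>j\<in>V. \<Sum>N\<in>Pow V. w N * (if i \<in> N \<and> j \<notin> N then phi i j - 1/2 else 0))"
      by (intro sum.cong refl) (rule sum.swap)
    also have "\<dots> = (\<Sum>i\<in>V. \<Sum>j\<in>V. q * (1 - q) * (if i \<noteq> j then phi i j - 1/2 else 0))"
    proof (intro sum.cong refl)
      fix i j assume i: "i \<in> V" and j: "j \<in> V"
      show "(\<Sum>N\<in>Pow V. w N * (if i \<in> N \<and> j \<notin> N then phi i j - 1/2 else 0)) = q * (1 - q) * (if i \<noteq> j then phi i j - 1/2 else 0)"
      proof (cases "i = j")
        case True
        then show ?thesis by simp
      next
        case False
        have "(\<Sum>N\<in>Pow V. w N * (if i \<in> N \<and> j \<notin> N then phi i j - 1/2 else 0))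
            = (\<Sum>N\<in>Pow V. q ^ card N * (1-q) ^ card (V - N) * (if i \<in> N \<and> j \<notin> N then 1 else 0)) * (phi i j - 1/2)"
          unfolding sum_distrib_right by (intro sum.cong refl) (simp add: wV)
        also have "\<dots> = q * (1 - q) * (phi i j - 1/2)" by (simp add: marg2[OF finV i j False])
        finally show ?thesis using False by simp
      qed
    qed
    also have "\<dots> = q * (1 - q) * T" unfolding T_def by (simp add: sum_distrib_left)
    finally show ?thesis .
  qed
  have PD2: "PD n q G = q + K * (q * (1 - q) * T)"
  proof -
    have "PD n q G = (\<Sum>N\<in>Pow V. w N * real (card N) / real n + K * (w N * H N))"
      unfolding PDeq by (intro sum.cong refl) (simp add: algebra_simps)
    also have "\<dots> = (\<Sum>N\<in>Pow V. w N * real (card N)) / real n + K * (\<Sum>N\<in>Pow V. w N * H N)"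
      by (simp add: sum.distrib sum_divide_distrib sum_distrib_left)
    also have "\<dots> = q + K * (q * (1 - q) * T)" using E1 E2 assms(1) by simp
    finally show ?thesis .
  qed
  obtain i0 j0 where g0: "good n E i0 j0" using graph_main[OF sym assms(1)] by blast
  define t where "t i j = (if i \<noteq> j then phi i j - 1/2 else 0)" for i j
  have upos: "t i j + t j i \<ge> 0" if "i \<in> V" "j \<in> V" for i j
  proof (cases "i = j")
    case True then show ?thesis unfolding t_def by simp
  next
    case False
    have "acnt n E i j + acnt n E j i \<le> n - 2" using a_sum_le[of i n j E] that False V_def by simp
    then have "phi i j + phi j i \<ge> 1" unfolding phi_def by (rule gval_pair)
    then show ?thesis unfolding t_def using False by simp
  qed
  have u0: "t i0 j0 + t j0 i0 > 0"
  proof -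
    have "phi i0 j0 + phi j0 i0 > 1" unfolding phi_def
      by (rule gval_pair_strict) (use g0 in \<open>auto simp: good_def\<close>)
    then show ?thesis unfolding t_def using g0 by (simp add: good_def)
  qed
  have i0V: "i0 \<in> V" "j0 \<in> V" using g0 by (auto simp: good_def V_def)
  have "2 * T = (\<Sum>i\<in>V. \<Sum>j\<in>V. t i j + t j i)"
  proof -
    have T1: "T = (\<Sum>i\<in>V. \<Sum>j\<in>V. t i j)" unfolding T_def t_def by simp
    have T2: "T = (\<Sum>i\<in>V. \<Sum>j\<in>V. t j i)" unfolding T1 by (rule sum.swap)
    have "(\<Sum>i\<in>V. \<Sum>j\<in>V. t i j + t j i) = (\<Sum>i\<in>V. \<Sum>j\<in>V. t i j) + (\<Sum>i\<in>V. \<Sum>j\<in>V. t j i)"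
      by (simp add: sum.distrib)
    then show ?thesis using T1 T2 by simp
  qed
  moreover have "(\<Sum>i\<in>V. \<Sum>j\<in>V. t i j + t j i) > 0"
  proof (rule sum_pos2[OF finV i0V(1)])
    show "0 < (\<Sum>j\<in>V. t i0 j + t j i0)"
      by (rule sum_pos2[where f="\<lambda>j. t i0 j + t j i0", OF finV i0V(2) u0]) (use upos i0V in auto)
    show "\<And>i. i \<in> V \<Longrightarrow> 0 \<le> (\<Sum>j\<in>V. t i j + t j i)"
      by (rule sum_nonneg) (use upos in auto)
  qed
  ultimately have Tpos: "T > 0" by simp
  have Kpos: "K > 0" unfolding K_def using n1 assms(1) by simp
  have "K * (q * (1 - q) * T) > 0" using Kpos Tpos assms(2,3) by simp
  then show ?thesis using PD2 by simp
qed

end
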